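(* Let $X$ be a robust $X$-set parameter and let $G$ be a graph. If $X(K_1)=0$ or $G$ has no isolated vertices, then the automorphism group of $\mathfrak{X}(G)$ is generated by $\{\nu_R: R\subseteq V(G)\text{ is } X\text{-irrelevant}\}\cup M_X(G)$, where each $\psi\in M_X(G)$ acts on $\mathfrak{X}(G)$ by $S\mapsto\psi(S)$.
   Context: All graphs are finite, simple, undirected, with nonempty vertex set. A super $X$-set parameter $X$ assigns to each graph $G$ a family of subsets of $V(G)$, called the $X$-sets of $G$, such that: every graph isomorphism maps $X$-sets to $X$-sets; every graph has at least one $X$-set; and (Superset) if $S$ is an $X$-set of $G$ and $S\subseteq S'\subseteq V(G)$, then $S'$ is an $X$-set of $G$. $X(G)$ is the minimum cardinality of an $X$-set. A robust $X$-set parameter is a super $X$-set parameter that additionally satisfies: ($(n-1)$-set) if $G$ is connected of order $n\ge2$, every set of $n-1$ vertices is an $X$-set; (Component consistency) if $G_1,\dots,G_k$ are the connected components of $G$, then $S\subseteq V(G)$ is an $X$-set of $G$ iff $S\cap V(G_i)$ is an $X$-set of $G_i$ for all $i$. The $X$-TAR graph $\mathfrak{X}(G)$ has as vertices the $X$-sets of $G$, with $S_1S_2$ an edge iff $|S_1\ominus S_2|=1$. A vertex is $X$-irrelevant if it lies in no minimal (w.r.t. inclusion) $X$-set; a set is $X$-irrelevant if all its vertices are. For $R\subseteq V(G)$, $\nu_R(S)=S\ominus R$ (symmetric difference). $M_X(G)$ is the set of bijections $\psi:V(G)\to V(G)$ that send minimal $X$-sets of $G$ to minimal $X$-sets of $G$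 of the same size. *)

theory Defs
  imports Main "HOL-Algebra.Bij" "HOL-Algebra.Generated_Groups"
begin

text \<open>Graphs: vertex set (finite, nonempty, subset of nat) and edges as 2-element subsets.
  Every finite simple graph is isomorphic to one of these.\<close>
type_synonym graph = "nat set \<times> nat set set"

definition verts :: "graph \<Rightarrow> nat set" where "verts G = fst G"
definition edges :: "graph \<Rightarrow> nat set set" where "edges G = snd G"

definition is_graph :: "graph \<Rightarrow> bool" where
  "is_graph G \<longleftrightarrow> finite (verts G) \<and> verts G \<noteq> {} \<and>
     (\<forall>e\<in>edges G. e \<subseteq> verts G \<and> card e = 2)"

definition graph_iso :: "(nat \<Rightarrow> nat) \<Rightarrow> graph \<Rightarrow> graph \<Rightarrow> bool" where
  "graph_iso f G H \<longleftrightarrow> bij_betw f (verts G) (verts H) \<and>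
     (\<forall>x\<in>verts G. \<forall>y\<in>verts G. ({x,y} \<in> edges G \<longleftrightarrow> {f x, f y} \<in> edges H))"

definition adj_rel :: "graph \<Rightarrow> (nat \<times> nat) set" where
  "adj_rel G = {(x,y). {x,y} \<in> edges G}"

definition connected_graph :: "graph \<Rightarrow> bool" where
  "connected_graph G \<longleftrightarrow> (\<forall>x\<in>verts G. \<forall>y\<in>verts G. (x,y) \<in> (adj_rel G)\<^sup>*)"

definition component_of :: "graph \<Rightarrow> nat \<Rightarrow> nat set" where
  "component_of G v = {u. (v,u) \<in> (adj_rel G)\<^sup>*}"

definition components :: "graph \<Rightarrow> nat set set" where
  "components G = component_of G ` verts G"

definition induced :: "graph \<Rightarrow> nat set \<Rightarrow> graph" where
  "induced G C = (C, {e\<in>edges G. e \<subseteq> C})"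

definition isolated :: "graph \<Rightarrow> nat \<Rightarrow> bool" where
  "isolated G v \<longleftrightarrow> v \<in> verts G \<and> (\<forall>e\<in>edges G. v \<notin> e)"

definition K1 :: graph where "K1 = ({0}, {})"

definition super_X_param :: "(graph \<Rightarrow> nat set set) \<Rightarrow> bool" where
  "super_X_param X \<longleftrightarrow>
     (\<forall>G. is_graph G \<longrightarrow> (\<forall>S\<in>X G. S \<subseteq> verts G)) \<and>
     (\<forall>G H f S. is_graph G \<and> is_graph H \<and> graph_iso f G H \<and> S \<in> X G \<longrightarrow> f ` S \<in> X H) \<and>
     (\<forall>G. is_graph G \<longrightarrow> X G \<noteq> {}) \<and>
     (\<forall>G S S'. is_graph G \<and> S \<in> X G \<and> S \<subseteq> S' \<and> S' \<subseteq> verts G \<longrightarrow> S' \<in> X G)"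

definition robust_X_param :: "(graph \<Rightarrow> nat set set) \<Rightarrow> bool" where
  "robust_X_param X \<longleftrightarrow> super_X_param X \<and>
     (\<forall>G S. is_graph G \<and> connected_graph G \<and> card (verts G) \<ge> 2 \<and> S \<subseteq> verts G \<and>
            card S = card (verts G) - 1 \<longrightarrow> S \<in> X G) \<and>
     (\<forall>G S. is_graph G \<and> S \<subseteq> verts G \<longrightarrow>
            (S \<in> X G \<longleftrightarrow> (\<forall>C\<in>components G. S \<inter> C \<in> X (induced G C))))"

definition Xnum :: "(graph \<Rightarrow> nat set set) \<Rightarrow> graph \<Rightarrow> nat" where
  "Xnum X G = Min (card ` X G)"

definition minimal_Xset :: "(graph \<Rightarrow> nat set set) \<Rightarrow> graph \<Rightarrow> nat set \<Rightarrow> bool" where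
  "minimal_Xset X G S \<longleftrightarrow> S \<in> X G \<and> (\<forall>T\<in>X G. T \<subseteq> S \<longrightarrow> T = S)"

definition X_irrelevant :: "(graph \<Rightarrow> nat set set) \<Rightarrow> graph \<Rightarrow> nat set \<Rightarrow> bool" where
  "X_irrelevant X G R \<longleftrightarrow> R \<subseteq> verts G \<and> (\<forall>v\<in>R. \<forall>S. minimal_Xset X G S \<longrightarrow> v \<notin> S)"

definition tar_adj :: "nat set \<Rightarrow> nat set \<Rightarrow> bool" where
  "tar_adj S1 S2 \<longleftrightarrow> card ((S1 - S2) \<union> (S2 - S1)) = 1"

text \<open>Automorphisms of the X-TAR graph, as (extensional) permutations of its vertex set X G.\<close>
definition tar_aut :: "(graph \<Rightarrow> nat set set) \<Rightarrow> graph \<Rightarrow> (nat set \<Rightarrow> nat set) set" where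
  "tar_aut X G = {f \<in> Bij (X G). \<forall>S1\<in>X G. \<forall>S2\<in>X G. tar_adj S1 S2 \<longleftrightarrow> tar_adj (f S1) (f S2)}"

definition nu :: "nat set \<Rightarrow> nat set \<Rightarrow> nat set" where
  "nu R S = (S - R) \<union> (R - S)"

definition M_X :: "(graph \<Rightarrow> nat set set) \<Rightarrow> graph \<Rightarrow> (nat \<Rightarrow> nat) set" where
  "M_X X G = {\<psi>. bij_betw \<psi> (verts G) (verts G) \<and>
     (\<forall>S. minimal_Xset X G S \<longrightarrow> minimal_Xset X G (\<psi> ` S) \<and> card (\<psi> ` S) = card S)}"

definition tar_generators :: "(graph \<Rightarrow> nat set set) \<Rightarrow> graph \<Rightarrow> (nat set \<Rightarrow> nat set) set" where
  "tar_generators X G =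
     {restrict (nu R) (X G) | R. X_irrelevant X G R} \<union>
     {restrict (\<lambda>S. \<psi> ` S) (X G) | \<psi>. \<psi> \<in> M_X X G}"

end

theory Submission
  imports Defs
begin

lemma nu_comm: "nu A B = nu B A" by (auto simp: nu_def)
lemma nu_assoc: "nu (nu A B) C = nu A (nu B C)" by (auto simp: nu_def)
lemma nu_self[simp]: "nu A A = {}" by (auto simp: nu_def)
lemma nu_empty[simp]: "nu A {} = A" "nu {} A = A" by (auto simp: nu_def)
lemma nu_cancel[simp]: "nu A (nu A B) = B" "nu (nu A B) B = A" by (auto simp: nu_def)
lemma tar_adj_iff: "tar_adj A B \<longleftrightarrow> (\<exists>x. nu A B = {x})"
  unfolding tar_adj_def nu_def[symmetric] by (simp add: card_1_singleton_iff nu_comm)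
lemma nu_left_comm: "nu a (nu b c) = nu b (nu a c)" by (auto simp: nu_def)
lemma nu_insert: "v \<notin> S \<Longrightarrow> nu S (insert v S) = {v}" by (auto simp: nu_def)

lemma square:
  assumes "nu a b = {x}" "nu b c = {p}" "nu c d = {y}" "nu d a = {z}" "a \<noteq> c" "b \<noteq> d"
  shows "z = p"
  using assms unfolding nu_def set_eq_iff by (metis Diff_iff Un_iff insert_iff empty_iff)

lemma inj_on_img_sub: assumes "inj_on h C" "A \<subseteq> C" "B \<subseteq> C" "h ` A \<subseteq> h ` B" shows "A \<subseteq> B"
proof
  fix x assume x: "x \<in> A"
  then obtain y where y: "y \<in> B" "h x = h y" using assms(4) by blast
  have "x = y" using inj_onD[OF assms(1) y(2)] x y(1) assms(2,3) by blast
  thus "x \<in> B" using y by simp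
qed

lemma image_nu: assumes "inj_on h C" "A \<subseteq> C" "B \<subseteq> C" shows "h ` (nu A B) = nu (h ` A) (h ` B)"
proof -
  have 1: "h ` (B - A) = h ` B - h ` A" using assms by (intro inj_on_image_set_diff) auto
  have 2: "h ` (A - B) = h ` A - h ` B" using assms by (intro inj_on_image_set_diff) auto
  show ?thesis unfolding nu_def image_Un 1 2 ..
qed

lemma nu_compl: "T \<subseteq> V \<Longrightarrow> P \<subseteq> V \<Longrightarrow> nu T (V - P) = nu (V - T) P"
  unfolding nu_def by auto

lemma nu_inj: "nu R A = nu R B \<Longrightarrow> A = B"
  by (metis nu_cancel(1))

locale ctx =
  fixes X :: "graph \<Rightarrow> nat set set" and G :: graph
  assumes finV: "finite (verts G)"
  and sub: "S \<in> X G \<Longrightarrow> S \<subseteq> verts G"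
  and up: "S \<in> X G \<Longrightarrow> S \<subseteq> T \<Longrightarrow> T \<subseteq> verts G \<Longrightarrow> T \<in> X G"
  and co: "v \<in> verts G \<Longrightarrow> verts G - {v} \<in> X G"
  and VF: "verts G \<in> X G"
begin

abbreviation "V \<equiv> verts G"
abbreviation "F \<equiv> X G"

definition lab :: "(nat set \<Rightarrow> nat set) \<Rightarrow> nat \<Rightarrow> nat" where
  "lab f v = (THE x. nu (f (V - {v})) (f V) = {x})"

lemma aut_bij: "f \<in> tar_aut X G \<Longrightarrow> bij_betw f F F"
  by (simp add: tar_aut_def Bij_def)

lemma aut_adj: "f \<in> tar_aut X G \<Longrightarrow> A \<in> F \<Longrightarrow> B \<in> F \<Longrightarrow> tar_adj A B \<Longrightarrow> \<exists>x. nu (f A) (f B) = {x}"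
  by (simp add: tar_aut_def tar_adj_iff)

lemma aut_edge:
  assumes f: "f \<in> tar_aut X G" and v: "v \<in> V" and "S \<in> F" "v \<notin> S"
  shows "nu (f S) (f (insert v S)) = {lab f v}"
  using assms(3,4)
proof (induction "card (V - S)" arbitrary: S rule: less_induct)
  case less
  have SV: "S \<subseteq> V" using less.prems sub by auto
  show ?case
  proof (cases "insert v S = V")
    case True
    hence S: "S = V - {v}" using less.prems SV by auto
    have "tar_adj (V - {v}) V" using v by (auto simp: tar_adj_iff nu_def)
    then obtain x where x: "nu (f (V - {v})) (f V) = {x}"
      using aut_adj[OF f] co[OF v] VF by blast
    hence "lab f v = x" unfolding lab_def by auto
    thus ?thesis using x S True by simp
  next
    case False
    then obtain w where w: "w \<in> V" "w \<notin> S" "w \<noteq> v" using SV v by auto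
    define S' where "S' = insert w S"
    have S'F: "S' \<in> F" using up[OF less.prems(1)] w SV unfolding S'_def by auto
    have vS': "v \<notin> S'" using w less.prems unfolding S'_def by auto
    have lt: "card (V - S') < card (V - S)"
      unfolding S'_def using w finV by (intro psubset_card_mono) auto
    have IH: "nu (f S') (f (insert v S')) = {lab f v}" using less.hyps[OF lt S'F vS'] .
    have vSF: "insert v S \<in> F" using up[OF less.prems(1)] v SV by auto
    have vS'F: "insert v S' \<in> F" using up[OF S'F, of "insert v S'"] v SV w unfolding S'_def by auto
    obtain x where x: "nu (f S) (f S') = {x}"
      using aut_adj[OF f less.prems(1) S'F] w unfolding S'_def tar_adj_iff by (metis nu_insert)
    obtain y where y: "nu (f (insert v S')) (f (insert v S)) = {y}"
      using aut_adj[OF f vS'F vSF] w unfolding S'_def tar_adj_iff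
      by (metis insert_commute insert_absorb2 nu_comm nu_insert insertE less.prems(2))
    obtain z where z: "nu (f (insert v S)) (f S) = {z}"
      using aut_adj[OF f vSF less.prems(1)] less.prems unfolding tar_adj_iff by (metis nu_comm nu_insert)
    have inj: "inj_on f F" using aut_bij[OF f] bij_betw_def by blast
    have ac: "f S \<noteq> f (insert v S')"
      using inj_onD[OF inj _ less.prems(1) vS'F] less.prems(2) by auto
    have bd: "f S' \<noteq> f (insert v S)"
      using inj_onD[OF inj _ S'F vSF] w less.prems(2) unfolding S'_def by auto
    have "z = lab f v" using square[OF x IH y z ac bd] .
    thus ?thesis using z nu_comm by metis
  qed
qed

lemma aut_sub: "f \<in> tar_aut X G \<Longrightarrow> S \<in> F \<Longrightarrow> f S \<in> F"
  using aut_bij bij_betwE by blast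

lemma nu_single_cases: "nu A B = {p} \<Longrightarrow> (p \<notin> A \<and> B = insert p A) \<or> (p \<notin> B \<and> A = insert p B)"
proof -
  assume h: "nu A B = {p}"
  have k: "\<And>x. (x \<in> A \<and> x \<notin> B \<or> x \<in> B \<and> x \<notin> A) = (x = p)"
  proof -
    fix x have "x \<in> nu A B \<longleftrightarrow> x = p" using h by simp
    thus "(x \<in> A \<and> x \<notin> B \<or> x \<in> B \<and> x \<notin> A) = (x = p)" unfolding nu_def by blast
  qed
  show ?thesis
  proof (cases "p \<in> A")
    case True
    hence "p \<notin> B" using k by blast
    moreover have "A = insert p B"
    proof (rule Set.set_eqI)
      fix x show "x \<in> A \<longleftrightarrow> x \<in> insert p B" using k[of x] True \<open>p \<notin> B\<close> by auto
    qed
    ultimately show ?thesis by simp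
  next
    case False
    hence "p \<in> B" using k by blast
    moreover have "B = insert p A"
    proof (rule Set.set_eqI)
      fix x show "x \<in> B \<longleftrightarrow> x \<in> insert p A" using k[of x] False \<open>p \<in> B\<close> by auto
    qed
    ultimately show ?thesis using False by simp
  qed
qed
lemma subgroup_aut: "subgroup (tar_aut X G) (BijGroup F)"
proof (rule subgroup.intro)
  show "tar_aut X G \<subseteq> carrier (BijGroup F)" by (auto simp: tar_aut_def BijGroup_def)
next
  fix f g assume f: "f \<in> tar_aut X G" and g: "g \<in> tar_aut X G"
  have fB: "f \<in> Bij F" and gB: "g \<in> Bij F" using f g by (auto simp: tar_aut_def)
  have "f \<otimes>\<^bsub>BijGroup F\<^esub> g = compose F f g" using fB gB by (simp add: BijGroup_def)
  moreover have "compose F f g \<in> tar_aut X G"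
    unfolding tar_aut_def using compose_Bij[OF fB gB] f g aut_sub[OF g]
    by (auto simp: compose_def tar_aut_def)
  ultimately show "f \<otimes>\<^bsub>BijGroup F\<^esub> g \<in> tar_aut X G" by simp
next
  show "\<one>\<^bsub>BijGroup F\<^esub> \<in> tar_aut X G"
    by (simp add: BijGroup_def tar_aut_def id_Bij)
next
  fix f assume f: "f \<in> tar_aut X G"
  have fB: "f \<in> Bij F" using f by (auto simp: tar_aut_def)
  have inv: "inv\<^bsub>BijGroup F\<^esub> f = (\<lambda>x \<in> F. inv_into F f x)" using inv_BijGroup[OF fB] .
  have bij: "bij_betw f F F" using fB by (simp add: Bij_def)
  have "(\<lambda>x \<in> F. inv_into F f x) \<in> tar_aut X G"
    unfolding tar_aut_def
  proof (intro CollectI conjI ballI)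
    show "(\<lambda>x \<in> F. inv_into F f x) \<in> Bij F" using restrict_inv_into_Bij[OF fB] .
    fix A B assume A: "A \<in> F" and B: "B \<in> F"
    have iA: "inv_into F f A \<in> F" and iB: "inv_into F f B \<in> F"
      using A B bij by (auto intro: inv_into_into simp: bij_betw_def)
    have eA: "f (inv_into F f A) = A" and eB: "f (inv_into F f B) = B"
      using A B bij by (metis bij_betw_def f_inv_into_f)+
    show "tar_adj A B = tar_adj ((\<lambda>x \<in> F. inv_into F f x) A) ((\<lambda>x \<in> F. inv_into F f x) B)"
    proof -
      have "tar_adj (inv_into F f A) (inv_into F f B) = tar_adj (f (inv_into F f A)) (f (inv_into F f B))"
        using f iA iB by (simp add: tar_aut_def)
      then show ?thesis using A B eA eB by simp
    qed
  qed
  thus "inv\<^bsub>BijGroup F\<^esub> f \<in> tar_aut X G" using inv by simp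
qed

lemma inv_aut: "f \<in> tar_aut X G \<Longrightarrow> inv\<^bsub>BijGroup F\<^esub> f \<in> tar_aut X G"
  by (rule subgroup.m_inv_closed[OF subgroup_aut])

lemma inv_aut_eq: "f \<in> tar_aut X G \<Longrightarrow> inv\<^bsub>BijGroup F\<^esub> f = (\<lambda>x \<in> F. inv_into F f x)"
  unfolding tar_aut_def by (rule inv_BijGroup) simp

lemma edge_top:
  assumes f: "f \<in> tar_aut X G" and v: "v \<in> V"
  shows "nu (f (V - {v})) (f V) = {lab f v}"
proof -
  have "insert v (V - {v}) = V" using v by blast
  thus ?thesis using aut_edge[OF f v co[OF v]] by simp
qed

lemma lab_in:
  assumes f: "f \<in> tar_aut X G" and v: "v \<in> V"
  shows "lab f v \<in> V"
proof -
  have "lab f v \<in> nu (f (V - {v})) (f V)" using edge_top[OF f v] by simp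
  moreover have "f (V - {v}) \<subseteq> V" using sub[OF aut_sub[OF f co[OF v]]] .
  moreover have "f V \<subseteq> V" using sub[OF aut_sub[OF f VF]] .
  ultimately show ?thesis unfolding nu_def by blast
qed

lemma lab_inv:
  assumes f: "f \<in> tar_aut X G" and v: "v \<in> V"
  defines "g \<equiv> inv\<^bsub>BijGroup F\<^esub> f"
  shows "lab g (lab f v) = v"
proof -
  have g: "g \<in> tar_aut X G" using inv_aut[OF f] g_def by simp
  have geq: "g = (\<lambda>x \<in> F. inv_into F f x)" using inv_aut_eq[OF f] g_def by simp
  have bij: "bij_betw f F F" using aut_bij[OF f] .
  have gf: "\<And>S. S \<in> F \<Longrightarrow> g (f S) = S" using bij geq aut_sub[OF f]
    by (simp add: bij_betw_def)
  define p where "p = lab f v"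
  have pV: "p \<in> V" using lab_in[OF f v] p_def by simp
  have e: "nu (f (V - {v})) (f V) = {p}"
    using edge_top[OF f v] p_def by simp
  have AF: "f V \<in> F" and BF: "f (V - {v}) \<in> F" using aut_sub[OF f] co[OF v] VF by auto
  have vv: "nu (V - {v}) V = {v}" using v by (auto simp: nu_def)
  from nu_single_cases[OF e] show ?thesis
  proof
    assume h: "p \<notin> f (V - {v}) \<and> f V = insert p (f (V - {v}))"
    have "nu (g (f (V - {v}))) (g (insert p (f (V - {v})))) = {lab g p}"
      using aut_edge[OF g pV BF] h by simp
    hence "nu (V - {v}) V = {lab g p}" using h gf[OF co[OF v]] gf[OF VF] by simp
    thus ?thesis using vv p_def by simp
  next
    assume h: "p \<notin> f V \<and> f (V - {v}) = insert p (f V)"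
    have "nu (g (f V)) (g (insert p (f V))) = {lab g p}"
      using aut_edge[OF g pV AF] h by simp
    hence "nu V (V - {v}) = {lab g p}" using h gf[OF co[OF v]] gf[OF VF] by simp
    thus ?thesis using vv p_def nu_comm[of V "V - {v}"] by simp
  qed
qed

lemma lab_bij:
  assumes f: "f \<in> tar_aut X G"
  shows "bij_betw (lab f) V V"
proof -
  have inj: "inj_on (lab f) V" using lab_inv[OF f] by (metis inj_onI)
  have "lab f ` V \<subseteq> V" using lab_in[OF f] by auto
  hence "lab f ` V = V" using endo_inj_surj[OF finV _ inj] by simp
  thus ?thesis using inj by (simp add: bij_betw_def)
qed

lemma aut_formula:
  assumes f: "f \<in> tar_aut X G" and "S \<in> F"
  shows "f S = nu (f V) (lab f ` (V - S))"
  using assms(2)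
proof (induction "card (V - S)" arbitrary: S rule: less_induct)
  case less
  have SV: "S \<subseteq> V" using less.prems sub by auto
  show ?case
  proof (cases "S = V")
    case True thus ?thesis by simp
  next
    case False
    then obtain w where w: "w \<in> V" "w \<notin> S" using SV by auto
    define S' where "S' = insert w S"
    have S'F: "S' \<in> F" using up[OF less.prems(1), of S'] w SV unfolding S'_def by auto
    have lt: "card (V - S') < card (V - S)"
      unfolding S'_def using w finV by (intro psubset_card_mono) auto
    have IH: "f S' = nu (f V) (lab f ` (V - S'))" using less.hyps[OF lt S'F] .
    have e: "nu (f S) (f S') = {lab f w}" using aut_edge[OF f w(1) less.prems w(2)] S'_def by simp
    have "nu (nu (f S) (f S')) (f S') = f S" by (rule nu_cancel(2))
    hence fS: "f S = nu {lab f w} (f S')" using e by simp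
    have inj: "inj_on (lab f) V" using lab_bij[OF f] bij_betw_def by blast
    have notin: "lab f w \<notin> lab f ` (V - S')"
      using inj w unfolding S'_def by (auto dest: inj_onD)
    have VS: "V - S = insert w (V - S')" using w unfolding S'_def by auto
    have "nu {lab f w} (lab f ` (V - S')) = lab f ` (V - S)"
      using notin VS by (auto simp: nu_def)
    thus ?thesis using fS IH nu_left_comm[of "{lab f w}" "f V" "lab f ` (V - S')"] by simp
  qed
qed


lemma ex_minimal: "S \<in> F \<Longrightarrow> \<exists>M. minimal_Xset X G M \<and> M \<subseteq> S"
proof (induction "card S" arbitrary: S rule: less_induct)
  case less
  show ?case
  proof (cases "minimal_Xset X G S")
    case True thus ?thesis by blast
  next
    case False
    then obtain T where T: "T \<in> F" "T \<subseteq> S" "T \<noteq> S" using less.prems unfolding minimal_Xset_def by blast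
    have "finite S" using sub[OF less.prems] finV finite_subset by blast
    hence "card T < card S" using T by (meson psubset_card_mono psubsetI)
    then obtain M where "minimal_Xset X G M" "M \<subseteq> T" using less.hyps T(1) by blast
    thus ?thesis using T(2) by blast
  qed
qed

lemma irr_nu: assumes "X_irrelevant X G R" "S \<in> F" shows "nu R S \<in> F"
proof -
  obtain M where M: "minimal_Xset X G M" "M \<subseteq> S" using ex_minimal[OF assms(2)] by blast
  have "M \<inter> R = {}" using assms(1) M(1) unfolding X_irrelevant_def by blast
  hence "M \<subseteq> nu R S" using M(2) unfolding nu_def by blast
  moreover have "nu R S \<subseteq> V" using assms sub unfolding X_irrelevant_def nu_def by blast
  moreover have "M \<in> F" using M(1) minimal_Xset_def by blast
  ultimately show ?thesis using up by blast
qed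

lemma irr_aut: assumes "X_irrelevant X G R" shows "restrict (nu R) F \<in> tar_aut X G"
proof -
  have "bij_betw (nu R) F F"
    unfolding bij_betw_def
  proof
    show "inj_on (nu R) F" by (meson inj_onI nu_inj)
    show "nu R ` F = F"
    proof (rule Set.set_eqI)
      fix S show "S \<in> nu R ` F \<longleftrightarrow> S \<in> F"
        using irr_nu[OF assms] by (metis image_eqI image_iff nu_cancel(1))
    qed
  qed
  hence "restrict (nu R) F \<in> Bij F" by (simp add: Bij_def bij_betw_restrict_eq)
  moreover have "nu (nu R A) (nu R B) = nu A B" for A B by (auto simp: nu_def)
  ultimately show ?thesis unfolding tar_aut_def tar_adj_iff by simp
qed

lemma M_X_img: assumes "\<psi> \<in> M_X X G" "S \<in> F" shows "\<psi> ` S \<in> F"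
proof -
  obtain M where M: "minimal_Xset X G M" "M \<subseteq> S" using ex_minimal[OF assms(2)] by blast
  have "minimal_Xset X G (\<psi> ` M)" using assms(1) M(1) unfolding M_X_def by blast
  hence "\<psi> ` M \<in> F" unfolding minimal_Xset_def by blast
  moreover have "\<psi> ` S \<subseteq> V" using assms(1) sub[OF assms(2)] unfolding M_X_def bij_betw_def by blast
  ultimately show ?thesis using up M(2) by blast
qed

lemma M_X_aut: assumes psi: "\<psi> \<in> M_X X G" shows "restrict (\<lambda>S. \<psi> ` S) F \<in> tar_aut X G"
proof -
  have bij: "bij_betw \<psi> V V" using psi unfolding M_X_def by blast
  hence inj: "inj_on \<psi> V" and im: "\<psi> ` V = V" unfolding bij_betw_def by auto
  define Mn where "Mn = {M. minimal_Xset X G M}"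
  have finMn: "finite Mn"
  proof (rule finite_subset)
    show "Mn \<subseteq> Pow V" unfolding Mn_def minimal_Xset_def using sub by blast
    show "finite (Pow V)" using finV by simp
  qed
  have MnV: "M \<in> Mn \<Longrightarrow> M \<subseteq> V" for M unfolding Mn_def minimal_Xset_def using sub by blast
  have "(\<lambda>S. \<psi> ` S) ` Mn \<subseteq> Mn" using psi unfolding M_X_def Mn_def by blast
  moreover have "inj_on (\<lambda>S. \<psi> ` S) Mn"
    by (rule inj_onI) (metis MnV inj inj_on_image_eq_iff)
  ultimately have MnEq: "(\<lambda>S. \<psi> ` S) ` Mn = Mn" using endo_inj_surj[OF finMn] by blast
  have "bij_betw (\<lambda>S. \<psi> ` S) F F"
    unfolding bij_betw_def
  proof
    show "inj_on (\<lambda>S. \<psi> ` S) F"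
      by (rule inj_onI) (metis sub inj inj_on_image_eq_iff)
    show "(\<lambda>S. \<psi> ` S) ` F = F"
    proof (rule Set.set_eqI)
      fix T show "T \<in> (\<lambda>S. \<psi> ` S) ` F \<longleftrightarrow> T \<in> F"
      proof
        assume "T \<in> (\<lambda>S. \<psi> ` S) ` F" thus "T \<in> F" using M_X_img[OF psi] by blast
      next
        assume T: "T \<in> F"
        obtain M' where M': "minimal_Xset X G M'" "M' \<subseteq> T" using ex_minimal[OF T] by blast
        have "M' \<in> (\<lambda>S. \<psi> ` S) ` Mn" using MnEq M'(1) Mn_def by blast
        then obtain M where M: "M \<in> Mn" "M' = \<psi> ` M" by blast
        define S where "S = inv_into V \<psi> ` T"
        have TV: "T \<subseteq> V" using sub[OF T] .
        have SV: "S \<subseteq> V" unfolding S_def using TV im by (metis image_subsetI inv_into_into subsetD)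
        have psiS: "\<psi> ` S = T" unfolding S_def using image_inv_into_cancel[OF im TV] .
        have "M \<subseteq> S" using inj_on_img_sub[OF inj MnV[OF M(1)] SV] M'(2) M(2) psiS by blast
        moreover have "M \<in> F" using M(1) unfolding Mn_def minimal_Xset_def by blast
        ultimately have "S \<in> F" using up SV by blast
        thus "T \<in> (\<lambda>S. \<psi> ` S) ` F" using psiS by blast
      qed
    qed
  qed
  hence "restrict (\<lambda>S. \<psi> ` S) F \<in> Bij F" by (simp add: Bij_def bij_betw_restrict_eq)
  moreover have "tar_adj A B = tar_adj (\<psi> ` A) (\<psi> ` B)" if "A \<in> F" "B \<in> F" for A B
  proof -
    have AV: "A \<subseteq> V" and BV: "B \<subseteq> V" using sub that by auto
    have NV: "nu A B \<subseteq> V" using AV BV unfolding nu_def by blast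
    have "nu (\<psi> ` A) (\<psi> ` B) = \<psi> ` (nu A B)" using image_nu[OF inj AV BV] by simp
    moreover have "card (\<psi> ` (nu A B)) = card (nu A B)"
      using card_image[OF inj_on_subset[OF inj NV]] .
    ultimately show ?thesis unfolding tar_adj_def nu_def[symmetric] by (simp add: nu_comm)
  qed
  ultimately show ?thesis unfolding tar_aut_def by simp
qed


lemma aut_decomp:
  assumes f: "f \<in> tar_aut X G"
  shows "f \<in> generate (BijGroup F) (tar_generators X G)"
proof -
  define p where "p = lab f"
  have bij: "bij_betw p V V" using lab_bij[OF f] p_def by simp
  hence inj: "inj_on p V" and im: "p ` V = V" unfolding bij_betw_def by auto
  define T where "T = f V"
  have TV: "T \<subseteq> V" using sub[OF aut_sub[OF f VF]] T_def by simp
  define R where "R = V - T"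
  define R' where "R' = inv_into V p ` R"
  have R'V: "R' \<subseteq> V" unfolding R'_def R_def using im by (metis Diff_subset image_subsetI inv_into_into subsetD)
  have pR': "p ` R' = R" unfolding R'_def R_def using image_inv_into_cancel[OF im] by blast
  have form: "f S = p ` (nu R' S)" if S: "S \<in> F" for S
  proof -
    have SV: "S \<subseteq> V" using sub[OF S] .
    have "f S = nu T (p ` (V - S))" using aut_formula[OF f S] T_def p_def by simp
    also have "p ` (V - S) = V - p ` S" using inj_on_image_set_diff[OF inj _ SV] im by simp
    also have "nu T (V - p ` S) = nu R (p ` S)" unfolding R_def
      using nu_compl[OF TV] SV im by blast
    also have "\<dots> = p ` (nu R' S)" using image_nu[OF inj R'V SV] pR' by simp
    finally show ?thesis .
  qed
  have fbij: "bij_betw f F F" using aut_bij[OF f] .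
  have surj: "\<exists>S\<in>F. f S = T'" if "T' \<in> F" for T' using fbij that by (metis bij_betw_def imageE)
  have irr: "X_irrelevant X G R'"
    unfolding X_irrelevant_def
  proof (intro conjI ballI allI impI R'V)
    fix v M assume v: "v \<in> R'" and M: "minimal_Xset X G M"
    show "v \<notin> M"
    proof
      assume vM: "v \<in> M"
      have MF: "M \<in> F" using M minimal_Xset_def by blast
      have MV: "M \<subseteq> V" using sub[OF MF] .
      define A where "A = nu R' M"
      have AV: "A \<subseteq> V" unfolding A_def nu_def using MV R'V by blast
      have vA: "v \<notin> A" unfolding A_def nu_def using v vM by blast
      define B where "B = insert v A"
      have BV: "B \<subseteq> V" unfolding B_def using AV R'V v by blast
      have "p ` A = f M" using form[OF MF] A_def by simp
      hence "p ` A \<in> F" using aut_sub[OF f MF] by simp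
      moreover have "p ` A \<subseteq> p ` B" unfolding B_def by blast
      moreover have "p ` B \<subseteq> V" using BV im by blast
      ultimately have "p ` B \<in> F" using up by blast
      then obtain S where S: "S \<in> F" "f S = p ` B" using surj by blast
      have "p ` B = p ` (nu R' S)" using S form by simp
      moreover have "nu R' S \<subseteq> V" using sub[OF S(1)] R'V unfolding nu_def by blast
      ultimately have "B = nu R' S" using inj_on_image_eq_iff[OF inj BV] by blast
      hence "S = nu R' B" by simp
      moreover have "nu R' B = M - {v}"
        unfolding B_def A_def nu_def using v vM by blast
      ultimately have "M - {v} \<in> F" using S(1) by simp
      hence "M - {v} = M" using M unfolding minimal_Xset_def by blast
      thus False using vM by blast
    qed
  qed
  have pF: "p ` S \<in> F" if S: "S \<in> F" for S
  proof -
    have "nu R' S \<in> F" using irr_nu[OF irr S] .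
    hence "f (nu R' S) \<in> F" using aut_sub[OF f] by blast
    thus ?thesis using form[OF irr_nu[OF irr S]] by simp
  qed
  have pM: "p \<in> M_X X G"
    unfolding M_X_def
  proof (intro CollectI conjI allI impI bij)
    fix M assume M: "minimal_Xset X G M"
    have MF: "M \<in> F" using M minimal_Xset_def by blast
    have MV: "M \<subseteq> V" using sub[OF MF] .
    show "card (p ` M) = card M" using card_image[OF inj_on_subset[OF inj MV]] .
    show "minimal_Xset X G (p ` M)"
      unfolding minimal_Xset_def
    proof (intro conjI ballI impI pF MF)
      fix T' assume T': "T' \<in> F" "T' \<subseteq> p ` M"
      obtain S where S: "S \<in> F" "f S = T'" using surj[OF T'(1)] by blast
      define S0 where "S0 = nu R' S"
      have S0F: "S0 \<in> F" using irr_nu[OF irr S(1)] S0_def by simp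
      have "p ` S0 = T'" using form[OF S(1)] S S0_def by simp
      hence "S0 \<subseteq> M" using inj_on_img_sub[OF inj sub[OF S0F] MV] T'(2) by blast
      hence "S0 = M" using M S0F unfolding minimal_Xset_def by blast
      thus "T' = p ` M" using \<open>p ` S0 = T'\<close> by simp
    qed
  qed
  define g1 where "g1 = restrict (\<lambda>S. p ` S) F"
  define g2 where "g2 = restrict (nu R') F"
  have g1: "g1 \<in> tar_generators X G" unfolding g1_def tar_generators_def using pM by blast
  have g2: "g2 \<in> tar_generators X G" unfolding g2_def tar_generators_def using irr by blast
  have g1B: "g1 \<in> Bij F" using M_X_aut[OF pM] g1_def by (simp add: tar_aut_def)
  have g2B: "g2 \<in> Bij F" using irr_aut[OF irr] g2_def by (simp add: tar_aut_def)
  have "f = compose F g1 g2"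
  proof (rule extensionalityI)
    show "f \<in> extensional F" using f by (simp add: tar_aut_def Bij_def)
    show "compose F g1 g2 \<in> extensional F" by simp
    fix S assume S: "S \<in> F"
    show "f S = compose F g1 g2 S"
      using S irr_nu[OF irr S] form[OF S] by (simp add: compose_def g1_def g2_def)
  qed
  also have "\<dots> = g1 \<otimes>\<^bsub>BijGroup F\<^esub> g2" using g1B g2B by (simp add: BijGroup_def)
  finally show ?thesis using g1 g2 by (simp add: generate.eng generate.incl)
qed

lemma gens_sub: "tar_generators X G \<subseteq> tar_aut X G"
  unfolding tar_generators_def using irr_aut M_X_aut by blast

lemma main: "tar_aut X G = generate (BijGroup F) (tar_generators X G)"
proof
  show "tar_aut X G \<subseteq> generate (BijGroup F) (tar_generators X G)" using aut_decomp by blast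
  show "generate (BijGroup F) (tar_generators X G) \<subseteq> tar_aut X G"
    using group.generate_subgroup_incl[OF group_BijGroup gens_sub subgroup_aut] .
qed

end

lemma sup_sub: "super_X_param X \<Longrightarrow> is_graph H \<Longrightarrow> S \<in> X H \<Longrightarrow> S \<subseteq> verts H"
  unfolding super_X_param_def by (drule conjunct1) blast
lemma sup_iso: "super_X_param X \<Longrightarrow> is_graph H \<Longrightarrow> is_graph H' \<Longrightarrow> graph_iso f H H' \<Longrightarrow> S \<in> X H \<Longrightarrow> f ` S \<in> X H'"
  unfolding super_X_param_def by (drule conjunct2, drule conjunct1) blast
lemma sup_ne: "super_X_param X \<Longrightarrow> is_graph H \<Longrightarrow> X H \<noteq> {}"
  unfolding super_X_param_def by (drule conjunct2, drule conjunct2, drule conjunct1) blast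
lemma sup_up: "super_X_param X \<Longrightarrow> is_graph H \<Longrightarrow> S \<in> X H \<Longrightarrow> S \<subseteq> S' \<Longrightarrow> S' \<subseteq> verts H \<Longrightarrow> S' \<in> X H"
  unfolding super_X_param_def by (drule conjunct2, drule conjunct2, drule conjunct2) blast
lemma rob_sup: "robust_X_param X \<Longrightarrow> super_X_param X"
  unfolding robust_X_param_def by (rule conjunct1)
lemma rob_n1: "robust_X_param X \<Longrightarrow> is_graph H \<Longrightarrow> connected_graph H \<Longrightarrow> card (verts H) \<ge> 2 \<Longrightarrow> S \<subseteq> verts H \<Longrightarrow>
            card S = card (verts H) - 1 \<Longrightarrow> S \<in> X H"
  unfolding robust_X_param_def by (drule conjunct2, drule conjunct1) blast
lemma rob_cc: "robust_X_param X \<Longrightarrow> is_graph H \<Longrightarrow> S \<subseteq> verts H \<Longrightarrow>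
            (S \<in> X H \<longleftrightarrow> (\<forall>C\<in>components H. S \<inter> C \<in> X (induced H C)))"
  unfolding robust_X_param_def by (drule conjunct2, drule conjunct2) blast

lemma adj_sym: "sym (adj_rel G)"
  unfolding adj_rel_def sym_def by (simp add: insert_commute)

lemma rt_sym: "(x, y) \<in> (adj_rel G)\<^sup>* \<Longrightarrow> (y, x) \<in> (adj_rel G)\<^sup>*"
  using sym_rtrancl[OF adj_sym] unfolding sym_def by blast

lemma rt_in_verts:
  assumes g: "is_graph G" and "(x, y) \<in> (adj_rel G)\<^sup>*" and "x \<in> verts G"
  shows "y \<in> verts G"
  using assms(2,3)
proof (induction rule: rtrancl_induct)
  case base thus ?case by simp
next
  case (step y z)
  hence "{y, z} \<in> edges G" unfolding adj_rel_def by simp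
  thus ?case using g unfolding is_graph_def by blast
qed

lemma comp_sub: "is_graph G \<Longrightarrow> w \<in> verts G \<Longrightarrow> component_of G w \<subseteq> verts G"
  unfolding component_of_def using rt_in_verts by blast

lemma comp_eq:
  assumes "v \<in> component_of G w" shows "component_of G w = component_of G v"
proof (rule Set.set_eqI)
  fix u
  have wv: "(w, v) \<in> (adj_rel G)\<^sup>*" using assms unfolding component_of_def by simp
  have vw: "(v, w) \<in> (adj_rel G)\<^sup>*" using rt_sym[OF wv] .
  show "u \<in> component_of G w \<longleftrightarrow> u \<in> component_of G v"
    unfolding component_of_def using wv vw rtrancl_trans by (metis mem_Collect_eq)
qed

lemma induced_graph:
  assumes g: "is_graph G" and "C \<subseteq> verts G" "C \<noteq> {}"
  shows "is_graph (induced G C)"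
  using assms finite_subset unfolding is_graph_def induced_def verts_def edges_def by auto

lemma induced_conn_aux:
  assumes "(v, x) \<in> (adj_rel G)\<^sup>*"
  shows "(v, x) \<in> (adj_rel (induced G (component_of G v)))\<^sup>*"
  using assms
proof (induction rule: rtrancl_induct)
  case base thus ?case by simp
next
  case (step y z)
  have yC: "y \<in> component_of G v" using step.hyps(1) unfolding component_of_def by simp
  have zC: "z \<in> component_of G v" using step.hyps unfolding component_of_def by simp
  have "{y, z} \<in> edges G" using step.hyps(2) unfolding adj_rel_def by simp
  hence "(y, z) \<in> adj_rel (induced G (component_of G v))"
    using yC zC unfolding adj_rel_def induced_def edges_def by simp
  thus ?case by (rule rtrancl_into_rtrancl[OF step.IH])
qed

lemma induced_conn: "connected_graph (induced G (component_of G v))"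
  unfolding connected_graph_def
proof (intro ballI)
  let ?r = "adj_rel (induced G (component_of G v))"
  fix x y assume x: "x \<in> verts (induced G (component_of G v))" and y: "y \<in> verts (induced G (component_of G v))"
  have vx: "(v, x) \<in> ?r\<^sup>*" using induced_conn_aux x unfolding induced_def verts_def component_of_def by simp
  have vy: "(v, y) \<in> ?r\<^sup>*" using induced_conn_aux y unfolding induced_def verts_def component_of_def by simp
  have "(x, v) \<in> ?r\<^sup>*" using sym_rtrancl[OF adj_sym[of "induced G (component_of G v)"]] vx unfolding sym_def by blast
  thus "(x, y) \<in> ?r\<^sup>*" using vy by (rule rtrancl_trans)
qed

lemma robust_co:
  assumes rob: "robust_X_param X" and g: "is_graph G"
    and h: "Xnum X K1 = 0 \<or> (\<forall>v\<in>verts G. \<not> isolated G v)"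
    and v: "v \<in> verts G"
  shows "verts G - {v} \<in> X G"
proof -
  have sup: "super_X_param X" using rob_sup[OF rob] .
  have cc: "\<And>S. S \<subseteq> verts G \<Longrightarrow> (S \<in> X G \<longleftrightarrow> (\<forall>C\<in>components G. S \<inter> C \<in> X (induced G C)))"
    using rob_cc[OF rob g] .
  note n1 = rob_n1[OF rob]
  note subX = sup_sub[OF sup]
  note neX = sup_ne[OF sup]
  note upX = sup_up[OF sup]
  note isoX = sup_iso[OF sup]
  have finV: "finite (verts G)" using g unfolding is_graph_def by simp
  show ?thesis
  proof (subst cc, blast, intro ballI)
    fix C assume C: "C \<in> components G"
    then obtain w where w: "w \<in> verts G" "C = component_of G w" unfolding components_def by blast
    have CV: "C \<subseteq> verts G" using comp_sub[OF g w(1)] w(2) by simp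
    have wC: "w \<in> C" using w(2) unfolding component_of_def by simp
    have gC: "is_graph (induced G C)" using induced_graph[OF g CV] wC by blast
    have vC: "verts (induced G C) = C" unfolding induced_def verts_def by simp
    show "(verts G - {v}) \<inter> C \<in> X (induced G C)"
    proof (cases "v \<in> C")
      case False
      hence eq: "(verts G - {v}) \<inter> C = C" using CV by blast
      obtain S where "S \<in> X (induced G C)" using neX[OF gC] by blast
      moreover have "S \<subseteq> C" using subX[OF gC calculation] vC by simp
      ultimately show ?thesis using upX[OF gC] vC eq by simp
    next
      case True
      have Cv: "C = component_of G v" using comp_eq True w(2) by simp
      have eq: "(verts G - {v}) \<inter> C = C - {v}" using CV by blast
      have finC: "finite C" using CV finV finite_subset by blast
      show ?thesis
      proof (cases "card C \<ge> 2")
        case True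
        have "C - {v} \<in> X (induced G C)"
          using n1[OF gC] induced_conn[of G v] Cv True vC \<open>v \<in> C\<close> finC by simp
        thus ?thesis using eq by simp
      next
        case False
        have Cs: "C = {v}"
        proof -
          have "card C \<le> 1" using False by simp
          moreover have "card C \<ge> 1" using finC \<open>v \<in> C\<close> by (metis One_nat_def Suc_leI card_gt_0_iff empty_iff)
          ultimately have "card C = 1" by simp
          thus ?thesis using \<open>v \<in> C\<close> by (metis card_1_singletonE singletonD)
        qed
        have iso: "isolated G v"
          unfolding isolated_def
        proof (intro conjI ballI v)
          fix e assume e: "e \<in> edges G"
          show "v \<notin> e"
          proof
            assume ve: "v \<in> e"
            have "card e = 2" using g e unfolding is_graph_def by blast
            then obtain a b where ab: "e = {a, b}" "a \<noteq> b" by (meson card_2_iff)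
            then obtain u where u: "u \<noteq> v" "e = {v, u}" using ve ab by (metis insert_commute insert_iff singleton_iff)
            hence "(v, u) \<in> adj_rel G" using e unfolding adj_rel_def by simp
            hence "u \<in> component_of G v" unfolding component_of_def by simp
            thus False using Cs Cv u(1) by simp
          qed
        qed
        hence X0: "Xnum X K1 = 0" using h v by blast
        have gK: "is_graph K1" unfolding is_graph_def K1_def verts_def edges_def by simp
        have finK: "finite (X K1)"
        proof (rule finite_subset)
          show "X K1 \<subseteq> Pow {0}" using subX[OF gK] unfolding K1_def verts_def by auto
        qed simp
        have "Min (card ` X K1) \<in> card ` X K1" using finK neX[OF gK] by simp
        then obtain S where S: "S \<in> X K1" "card S = 0" using X0 unfolding Xnum_def by auto
        have "S \<subseteq> {0}" using subX[OF gK S(1)] unfolding K1_def verts_def by simp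
        hence "S = {}" using S(2) by (metis card_0_eq finite.emptyI finite_insert finite_subset)
        hence e0: "{} \<in> X K1" using S(1) by simp
        have gi: "graph_iso (\<lambda>_. v) K1 (induced G C)"
          unfolding graph_iso_def
        proof (intro conjI ballI)
          show "bij_betw (\<lambda>_. v) (verts K1) (verts (induced G C))"
            unfolding K1_def verts_def induced_def Cs by (simp add: bij_betw_def)
          fix x y assume "x \<in> verts K1" "y \<in> verts K1"
          have "{v} \<notin> edges G" using g unfolding is_graph_def by fastforce
          thus "({x, y} \<in> edges K1) = ({v, v} \<in> edges (induced G C))"
            unfolding K1_def edges_def induced_def by simp
        qed
        have "(\<lambda>_::nat. v) ` ({}::nat set) \<in> X (induced G C)" using isoX[OF gK gC gi e0] .
        thus ?thesis using eq Cs by simp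
      qed
    qed
  qed
qed


theorem theorem2p27:
  fixes X :: "graph \<Rightarrow> nat set set" and G :: graph
  assumes "robust_X_param X"
    and "is_graph G"
    and "Xnum X K1 = 0 \<or> (\<forall>v\<in>verts G. \<not> isolated G v)"
  shows "tar_aut X G = generate (BijGroup (X G)) (tar_generators X G)"
proof -
  have sup: "super_X_param X" using rob_sup[OF assms(1)] .
  have sub: "\<And>S. S \<in> X G \<Longrightarrow> S \<subseteq> verts G" using sup_sub[OF sup assms(2)] .
  have up: "\<And>S T. S \<in> X G \<Longrightarrow> S \<subseteq> T \<Longrightarrow> T \<subseteq> verts G \<Longrightarrow> T \<in> X G"
    using sup_up[OF sup assms(2)] .
  have ne: "X G \<noteq> {}" using sup_ne[OF sup assms(2)] .
  then obtain S where "S \<in> X G" by blast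
  hence VF: "verts G \<in> X G" using up[of S "verts G"] sub[of S] by simp
  have finV: "finite (verts G)" using assms(2) unfolding is_graph_def by simp
  have "ctx X G" by (rule ctx.intro[where X=X and G=G, OF finV sub up robust_co[OF assms] VF])
  thus ?thesis by (rule ctx.main)
qed

end
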